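(* Let $n>2k$, $k\ge t+3$, $t\ge 2$, and let $\mathcal F\subseteq\binom{[n]}{k}$ be a maximal $t$-intersecting family with $\tau_t(\mathcal F)=t+2$ and $\tau_t(\mathcal T_t(\mathcal F))=t+1$. If there exist $U\in\mathcal U_t(\mathcal F)$ and $F\in\mathcal F$ with $|U\cap F|\le t-2$, then $|\mathcal T_t(\mathcal F)|<(t+2)(k-t)+1$.
   Context: A family is $t$-intersecting if any two members meet in at least $t$ elements. A $t$-cover of a family $\mathcal G$ of subsets of $[n]$ is a set $S\subseteq[n]$ with $|S\cap G|\ge t$ for all $G\in\mathcal G$; $\tau_t(\mathcal G)$ is the minimum size of a $t$-cover, and $\mathcal T_t(\mathcal G)$ is the set of all $t$-covers of $\mathcal G$ of size $\tau_t(\mathcal G)$. $\mathcal U_t(\mathcal F)=\mathcal T_t(\mathcal T_t(\mathcal F))$ is the family of all minimum-size $t$-covers of $\mathcal T_t(\mathcal F)$. A $t$-intersecting $\mathcal F\subseteq\binom{[n]}{k}$ is maximal if no $t$-intersecting subfamily of $\binom{[n]}{k}$ properly contains it. *)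

theory Defs
  imports Main
begin

definition t_intersecting :: "nat \<Rightarrow> nat set set \<Rightarrow> bool" where
  "t_intersecting t \<F> \<longleftrightarrow> (\<forall>A\<in>\<F>. \<forall>B\<in>\<F>. card (A \<inter> B) \<ge> t)"

definition k_subsets :: "nat \<Rightarrow> nat \<Rightarrow> nat set set" where
  "k_subsets n k = {A. A \<subseteq> {1..n} \<and> card A = k}"

definition is_t_cover :: "nat \<Rightarrow> nat \<Rightarrow> nat set set \<Rightarrow> nat set \<Rightarrow> bool" where
  "is_t_cover n t \<G> S \<longleftrightarrow> S \<subseteq> {1..n} \<and> (\<forall>G\<in>\<G>. card (S \<inter> G) \<ge> t)"

definition tau_t :: "nat \<Rightarrow> nat \<Rightarrow> nat set set \<Rightarrow> nat" where
  "tau_t n t \<G> = (LEAST m. \<exists>S. is_t_cover n t \<G> S \<and> card S = m)"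

definition T_t :: "nat \<Rightarrow> nat \<Rightarrow> nat set set \<Rightarrow> nat set set" where
  "T_t n t \<G> = {S. is_t_cover n t \<G> S \<and> card S = tau_t n t \<G>}"

definition U_t :: "nat \<Rightarrow> nat \<Rightarrow> nat set set \<Rightarrow> nat set set" where
  "U_t n t \<F> = T_t n t (T_t n t \<F>)"

definition maximal_t_intersecting :: "nat \<Rightarrow> nat \<Rightarrow> nat \<Rightarrow> nat set set \<Rightarrow> bool" where
  "maximal_t_intersecting n k t \<F> \<longleftrightarrow>
     \<F> \<subseteq> k_subsets n k \<and> t_intersecting t \<F> \<and>
     (\<forall>\<G>. \<F> \<subset> \<G> \<and> \<G> \<subseteq> k_subsets n k \<longrightarrow> \<not> t_intersecting t \<G>)"

end

theory Submission
  imports Defs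
begin

lemma star_card:
  assumes "finite Y" "a \<in> Y"
  shows "card {B. B \<subseteq> Y \<and> card B = 2 \<and> a \<in> B} \<le> card Y - 1"
proof -
  have "{B. B \<subseteq> Y \<and> card B = 2 \<and> a \<in> B} \<subseteq> (\<lambda>y. {a,y}) ` (Y - {a})"
  proof
    fix B assume "B \<in> {B. B \<subseteq> Y \<and> card B = 2 \<and> a \<in> B}"
    then obtain x y where "B = {x,y}" "x \<noteq> y" "B \<subseteq> Y" "a \<in> B" by (auto simp: card_2_iff)
    then show "B \<in> (\<lambda>y. {a,y}) ` (Y - {a})" by (auto simp: insert_commute)
  qed
  then have "card {B. B \<subseteq> Y \<and> card B = 2 \<and> a \<in> B} \<le> card ((\<lambda>y. {a,y}) ` (Y - {a}))"
    using assms by (intro card_mono) auto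
  also have "\<dots> \<le> card (Y - {a})" by (rule card_image_le) (use assms in auto)
  also have "\<dots> = card Y - 1" using assms by simp
  finally show ?thesis .
qed

lemma two_eq: "card B = 2 \<Longrightarrow> x \<in> B \<Longrightarrow> y \<in> B \<Longrightarrow> x \<noteq> y \<Longrightarrow> B = {x,y}"
  by (metis card_2_iff doubleton_eq_iff insertE singletonD)

lemma L1:
  assumes "card e = 2" "card f = 2" "e \<inter> f = {}"
  shows "card {B. card B = 2 \<and> B \<inter> e \<noteq> {} \<and> B \<inter> f \<noteq> {}} \<le> 4 \<and>
         finite {B. card B = 2 \<and> B \<inter> e \<noteq> {} \<and> B \<inter> f \<noteq> {}}"
proof -
  obtain a b where e: "e = {a,b}" "a \<noteq> b" using assms(1) by (auto simp: card_2_iff)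
  obtain c d where f: "f = {c,d}" "c \<noteq> d" using assms(2) by (auto simp: card_2_iff)
  have "{B. card B = 2 \<and> B \<inter> e \<noteq> {} \<and> B \<inter> f \<noteq> {}} \<subseteq> {{a,c},{a,d},{b,c},{b,d}}"
  proof
    fix B assume B: "B \<in> {B. card B = 2 \<and> B \<inter> e \<noteq> {} \<and> B \<inter> f \<noteq> {}}"
    then obtain x y where xy: "B = {x,y}" "x \<noteq> y" by (auto simp: card_2_iff)
    show "B \<in> {{a,c},{a,d},{b,c},{b,d}}" using B xy e f assms(3) by (auto simp: insert_commute)
  qed
  then have "card {B. card B = 2 \<and> B \<inter> e \<noteq> {} \<and> B \<inter> f \<noteq> {}} \<le> card {{a,c},{a,d},{b,c},{b,d}}"
    by (intro card_mono) auto
  also have "\<dots> \<le> 4" using card_length[of "[{a,c},{a,d},{b,c},{b,d}]"] by simp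
  finally show ?thesis using finite_subset[OF \<open>_ \<subseteq> {{a,c},{a,d},{b,c},{b,d}}\<close>] by simp
qed

lemma L2:
  assumes "card e = 2" "card f = 2" "e \<inter> f = {}"
    and H: "H \<subseteq> {B. card B = 2 \<and> B \<inter> e \<noteq> {} \<and> B \<inter> f \<noteq> {}}"
    and I: "\<forall>B1\<in>H. \<forall>B2\<in>H. B1 \<inter> B2 \<noteq> {}"
  shows "card H \<le> 2"
proof -
  obtain a b where e: "e = {a,b}" "a \<noteq> b" using assms(1) by (auto simp: card_2_iff)
  obtain c d where f: "f = {c,d}" "c \<noteq> d" using assms(2) by (auto simp: card_2_iff)
  have dis: "a \<noteq> c" "a \<noteq> d" "b \<noteq> c" "b \<noteq> d" using e f assms(3) by auto
  have sub: "H \<subseteq> {{a,c},{a,d},{b,c},{b,d}}"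
  proof
    fix B assume B: "B \<in> H"
    then have B': "card B = 2 \<and> B \<inter> e \<noteq> {} \<and> B \<inter> f \<noteq> {}" using H by auto
    then obtain x y where xy: "B = {x,y}" "x \<noteq> y" by (auto simp: card_2_iff)
    show "B \<in> {{a,c},{a,d},{b,c},{b,d}}" using B' xy e f assms(3) by (auto simp: insert_commute)
  qed
  have n1: "\<not> ({a,c} \<in> H \<and> {b,d} \<in> H)" using I[rule_format, of "{a,c}" "{b,d}"] dis e(2) f(2) by auto
  have n2: "\<not> ({a,d} \<in> H \<and> {b,c} \<in> H)" using I[rule_format, of "{a,d}" "{b,c}"] dis e(2) f(2) by auto
  have c2: "card {x, y} \<le> 2" for x y :: "'a set" using card_length[of "[x,y]"] by simp
  obtain x y where "H \<subseteq> {x,y}"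
  proof (cases "{a,c} \<in> H")
    case True
    then have "{b,d} \<notin> H" using n1 by blast
    show ?thesis
    proof (cases "{a,d} \<in> H")
      case True
      then have "{b,c} \<notin> H" using n2 by blast
      then show ?thesis using sub \<open>{b,d} \<notin> H\<close> that[of "{a,c}" "{a,d}"] by blast
    next
      case False
      then show ?thesis using sub \<open>{b,d} \<notin> H\<close> that[of "{a,c}" "{b,c}"] by blast
    qed
  next
    case False
    show ?thesis
    proof (cases "{a,d} \<in> H")
      case True
      then have "{b,c} \<notin> H" using n2 by blast
      then show ?thesis using sub False that[of "{a,d}" "{b,d}"] by blast
    next
      case F2: False
      then show ?thesis using sub False that[of "{b,c}" "{b,d}"] by blast
    qed
  qed
  then show ?thesis using c2 by (meson card_mono finite.emptyI finite.insertI order_trans)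
qed

lemma L3:
  assumes "finite Y" "g \<subseteq> Y" "card g = 2"
  shows "card {B. B \<subseteq> Y \<and> card B = 2 \<and> B \<inter> g \<noteq> {}} \<le> 2 * (card Y - 1)"
proof -
  obtain p q where g: "g = {p,q}" "p \<noteq> q" using assms(3) by (auto simp: card_2_iff)
  have "{B. B \<subseteq> Y \<and> card B = 2 \<and> B \<inter> g \<noteq> {}} \<subseteq>
        {B. B \<subseteq> Y \<and> card B = 2 \<and> p \<in> B} \<union> {B. B \<subseteq> Y \<and> card B = 2 \<and> q \<in> B}"
    using g by auto
  then have "card {B. B \<subseteq> Y \<and> card B = 2 \<and> B \<inter> g \<noteq> {}} \<le>
        card ({B. B \<subseteq> Y \<and> card B = 2 \<and> p \<in> B} \<union> {B. B \<subseteq> Y \<and> card B = 2 \<and> q \<in> B})"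
    using assms(1) by (intro card_mono) auto
  also have "\<dots> \<le> card {B. B \<subseteq> Y \<and> card B = 2 \<and> p \<in> B} + card {B. B \<subseteq> Y \<and> card B = 2 \<and> q \<in> B}"
    by (rule card_Un_le)
  also have "\<dots> \<le> (card Y - 1) + (card Y - 1)"
    using star_card[of Y p] star_card[of Y q] assms g by auto
  finally show ?thesis by simp
qed

lemma L4:
  assumes "finite Y" "card Y \<ge> 4"
    and H: "H \<subseteq> {B. B \<subseteq> Y \<and> card B = 2}"
    and I: "\<forall>B1\<in>H. \<forall>B2\<in>H. B1 \<inter> B2 \<noteq> {}"
  shows "card H \<le> card Y - 1"
proof (cases "H = {}")
  case True then show ?thesis by simp
next
  case False
  then obtain e where eH: "e \<in> H" by auto
  have "card e = 2" using eH H by auto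
  then obtain a b where e: "e = {a,b}" "a \<noteq> b" by (meson card_2_iff)
  have abY: "a \<in> Y" "b \<in> Y" using eH e H by auto
  show ?thesis
  proof (cases "\<forall>B\<in>H. a \<in> B")
    case True
    then have "H \<subseteq> {B. B \<subseteq> Y \<and> card B = 2 \<and> a \<in> B}" using H by auto
    then have "card H \<le> card {B. B \<subseteq> Y \<and> card B = 2 \<and> a \<in> B}"
      using assms(1) by (intro card_mono) auto
    then show ?thesis using star_card[of Y a] assms(1) abY by linarith
  next
    case Fa: False
    show ?thesis
    proof (cases "\<forall>B\<in>H. b \<in> B")
      case True
      then have "H \<subseteq> {B. B \<subseteq> Y \<and> card B = 2 \<and> b \<in> B}" using H by auto
      then have "card H \<le> card {B. B \<subseteq> Y \<and> card B = 2 \<and> b \<in> B}"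
        using assms(1) by (intro card_mono) auto
      then show ?thesis using star_card[of Y b] assms(1) abY by linarith
    next
      case Fb: False
      obtain B1 where B1: "B1 \<in> H" "a \<notin> B1" using Fa by auto
      obtain B2 where B2: "B2 \<in> H" "b \<notin> B2" using Fb by auto
      have cB1: "card B1 = 2" using B1 H by auto
      have cB2: "card B2 = 2" using B2 H by auto
      have "B1 \<inter> e \<noteq> {}" using I B1 eH by blast
      then have bB1: "b \<in> B1" using B1 e by auto
      have "B2 \<inter> e \<noteq> {}" using I B2 eH by blast
      then have aB2: "a \<in> B2" using B2 e by auto
      have "card (B1 - {b}) = 1" using cB1 bB1 by simp
      then obtain c where c0: "B1 - {b} = {c}" by (meson card_1_singletonE)
      have c: "B1 = {b,c}" "c \<noteq> b" "c \<noteq> a" using c0 bB1 B1(2) by auto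
      have "card (B2 - {a}) = 1" using cB2 aB2 by simp
      then obtain d where d0: "B2 - {a} = {d}" by (meson card_1_singletonE)
      have d: "B2 = {a,d}" "d \<noteq> a" "d \<noteq> b" using d0 aB2 B2(2) by auto
      have "B1 \<inter> B2 \<noteq> {}" using I B1 B2 by blast
      then have "c = d" using c d e by auto
      have sub: "H \<subseteq> {{a,b},{a,c},{b,c}}"
      proof
        fix B assume B: "B \<in> H"
        have cB: "card B = 2" using B H by auto
        have i1: "B \<inter> e \<noteq> {}" using I B eH by blast
        have i2: "B \<inter> B1 \<noteq> {}" using I B B1 by blast
        have i3: "B \<inter> B2 \<noteq> {}" using I B B2 by blast
        have "a \<in> B \<or> b \<in> B" using i1 e by auto
        moreover have "b \<in> B \<or> c \<in> B" using i2 c by auto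
        moreover have "a \<in> B \<or> c \<in> B" using i3 d \<open>c = d\<close> by auto
        ultimately have "B = {a,b} \<or> B = {a,c} \<or> B = {b,c}"
          using two_eq[OF cB] e c by metis
        then show "B \<in> {{a,b},{a,c},{b,c}}" by blast
      qed
      have "card H \<le> card {{a,b},{a,c},{b,c}}" using sub by (intro card_mono) auto
      also have "\<dots> \<le> 3" using card_length[of "[{a,b},{a,c},{b,c}]"] by simp
      finally show ?thesis using assms(2) by linarith
    qed
  qed
qed

lemma comb:
  fixes U F :: "'a set" and TT :: "'a set set" and t k :: nat
  assumes finU: "finite U" and finF: "finite F" and cU: "card U = t+1"
    and cUF: "card (U \<inter> F) \<le> t-2" and cF: "card F = k" and kt: "k \<ge> t+3" and t2: "t \<ge> 2"
    and hT: "\<forall>T\<in>TT. card T = t+2 \<and> t \<le> card (T \<inter> F) \<and> t \<le> card (U \<inter> T)"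
    and tint: "\<forall>T1\<in>TT. \<forall>T2\<in>TT. t \<le> card (T1 \<inter> T2)"
    and notau: "\<not> (\<exists>S\<subseteq>U. card S = t \<and> (\<forall>T\<in>TT. t \<le> card (S \<inter> T)))"
  shows "card TT \<le> 4 * (k - t)"
proof -
  define C where "C = U \<inter> F"
  define X where "X = U - F"
  define Y where "Y = F - U"
  define a where "a T = T \<inter> X" for T :: "'a set"
  define b where "b T = T \<inter> Y" for T :: "'a set"
  have TTne: "TT \<noteq> {}"
  proof
    assume "TT = {}"
    obtain S where "S \<subseteq> U" "card S = t" using obtain_subset_with_card_n[of t U] cU by auto
    then show False using notau \<open>TT = {}\<close> by auto
  qed
  have finC: "finite C" using finU C_def by auto
  have per: "C \<subseteq> T \<and> T \<subseteq> U \<union> F \<and> card (a T) = 2 \<and> card (b T) = 2 \<and> finite T \<and> card C = t - 2"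
    if T: "T \<in> TT" for T
  proof -
    have cT: "card T = t+2" and h1: "t \<le> card (T \<inter> F)" and h2: "t \<le> card (U \<inter> T)" using hT T by auto
    have fT: "finite T" using cT by (intro card_ge_0_finite) simp
    have h2': "t \<le> card (T \<inter> U)" using h2 by (simp add: Int_commute)
    have e: "card (T \<inter> U) + card (T \<inter> F) = card (T \<inter> U \<union> T \<inter> F) + card (T \<inter> U \<inter> (T \<inter> F))"
      using card_Un_Int[of "T \<inter> U" "T \<inter> F"] fT by auto
    have l1: "card (T \<inter> U \<union> T \<inter> F) \<le> t + 2" using card_mono[OF fT, of "T \<inter> U \<union> T \<inter> F"] cT by auto
    have s2: "T \<inter> U \<inter> (T \<inter> F) \<subseteq> C" unfolding C_def by auto
    have l2: "card (T \<inter> U \<inter> (T \<inter> F)) \<le> card C" using card_mono[OF finC s2] .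
    have cC: "card C \<le> t - 2" using cUF C_def by simp
    have q1: "card (T \<inter> U \<union> T \<inter> F) = card T" using e l1 l2 cC h1 h2' t2 cT by linarith
    have q2: "card (T \<inter> U \<inter> (T \<inter> F)) = card C" using e l1 l2 cC h1 h2' t2 by linarith
    have tu: "card (T \<inter> U) = t" and tf: "card (T \<inter> F) = t" using e l1 l2 cC h1 h2' t2 by linarith+
    have "T \<inter> U \<union> T \<inter> F = T" using card_subset_eq[OF fT _ q1] by auto
    then have sub: "T \<subseteq> U \<union> F" by auto
    have "T \<inter> U \<inter> (T \<inter> F) = C" using card_subset_eq[OF finC s2 q2] .
    then have CT: "C \<subseteq> T" by auto
    have cCe: "card C = t - 2" using q2 e l1 l2 cC h1 h2' t2 by linarith
    have "a T = T \<inter> U - C" unfolding a_def X_def C_def by auto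
    then have ca: "card (a T) = 2" using card_Diff_subset[of C "T \<inter> U"] finC CT tu cCe t2
      unfolding C_def by (auto simp: Int_commute)
    have "b T = T \<inter> F - C" unfolding b_def Y_def C_def by auto
    then have cb: "card (b T) = 2" using card_Diff_subset[of C "T \<inter> F"] finC CT tf cCe t2
      unfolding C_def by (auto simp: Int_commute)
    show ?thesis using CT sub ca cb fT cCe by auto
  qed
  obtain T0 where T0: "T0 \<in> TT" using TTne by auto
  have cC: "card C = t - 2" using per[OF T0] by auto
  have finX: "finite X" and finY: "finite Y" using finU finF X_def Y_def by auto
  have cX: "card X = 3"
  proof -
    have "X = U - C" unfolding X_def C_def by auto
    then show ?thesis using card_Diff_subset[of C U] finC cC cU t2 unfolding C_def by auto
  qed
  have cY: "card Y = k - t + 2"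
  proof -
    have "Y = F - C" unfolding Y_def C_def by auto
    then show ?thesis using card_Diff_subset[of C F] finC cC cF t2 kt unfolding C_def by auto
  qed
  have decomp: "T = C \<union> a T \<union> b T" if "T \<in> TT" for T
    using per[OF that] unfolding a_def b_def C_def X_def Y_def by auto
  have finTT: "finite TT"
  proof -
    have "TT \<subseteq> Pow (U \<union> F)" using per by auto
    then show ?thesis using finU finF finite_subset by blast
  qed
  have inj: "inj_on (\<lambda>T. (a T, b T)) TT"
    by (rule inj_onI) (metis decomp prod.inject)
  have count: "card SS \<le> card PP * card QQ"
    if "SS \<subseteq> TT" "a ` SS \<subseteq> PP" "b ` SS \<subseteq> QQ" "finite PP" "finite QQ" for SS PP QQ
  proof -
    have "card SS = card ((\<lambda>T. (a T, b T)) ` SS)"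
      using card_image[OF inj_on_subset[OF inj that(1)]] by simp
    also have "\<dots> \<le> card (PP \<times> QQ)" using that by (intro card_mono) auto
    also have "\<dots> = card PP * card QQ" by (rule card_cartesian_product)
    finally show ?thesis .
  qed
  have P2: "b T1 \<inter> b T2 \<noteq> {}" if T12: "T1 \<in> TT" "T2 \<in> TT" "a T1 \<noteq> a T2" for T1 T2
  proof
    assume bb: "b T1 \<inter> b T2 = {}"
    have "T1 \<inter> T2 \<subseteq> C \<union> (a T1 \<inter> a T2)"
    proof
      fix x assume x: "x \<in> T1 \<inter> T2"
      have "x \<in> C \<union> a T1 \<union> b T1" "x \<in> C \<union> a T2 \<union> b T2" using decomp[OF T12(1)] decomp[OF T12(2)] x by auto
      then show "x \<in> C \<union> (a T1 \<inter> a T2)" using bb unfolding a_def b_def C_def X_def Y_def by auto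
    qed
    then have "card (T1 \<inter> T2) \<le> card (C \<union> (a T1 \<inter> a T2))"
      using finC finX a_def by (intro card_mono) auto
    also have "\<dots> \<le> card C + card (a T1 \<inter> a T2)" by (rule card_Un_le)
    also have "card (a T1 \<inter> a T2) \<le> 1"
    proof -
      have fa: "finite (a T1)" using finX a_def by auto
      have "a T1 \<inter> a T2 \<noteq> a T1"
      proof
        assume "a T1 \<inter> a T2 = a T1"
        then have "a T1 \<subseteq> a T2" by auto
        moreover have "finite (a T2)" using finX a_def by auto
        ultimately have "a T1 = a T2" using card_subset_eq per[OF T12(1)] per[OF T12(2)] by metis
        then show False using T12(3) by simp
      qed
      then have "a T1 \<inter> a T2 \<subset> a T1" by auto
      then have "card (a T1 \<inter> a T2) < card (a T1)" using psubset_card_mono[OF fa] by blast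
      then show ?thesis using per[OF T12(1)] by simp
    qed
    finally have "card (T1 \<inter> T2) \<le> t - 1" using cC t2 by linarith
    moreover have "t \<le> card (T1 \<inter> T2)" using tint T12(1,2) by blast
    ultimately show False using t2 by linarith
  qed
  have diffa: "\<exists>T1\<in>TT. \<exists>T2\<in>TT. a T1 \<noteq> a T2"
  proof (rule ccontr)
    assume nd: "\<not> (\<exists>T1\<in>TT. \<exists>T2\<in>TT. a T1 \<noteq> a T2)"
    have same: "\<forall>T\<in>TT. a T = a T0"
    proof
      fix T assume "T \<in> TT"
      then show "a T = a T0" using nd T0 by metis
    qed
    define S where "S = C \<union> a T0"
    have SU: "S \<subseteq> U" unfolding S_def C_def a_def X_def by auto
    have "C \<inter> a T0 = {}" unfolding C_def a_def X_def by auto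
    moreover have "finite (a T0)" using finX unfolding a_def by auto
    ultimately have "card S = card C + card (a T0)" unfolding S_def
      using card_Un_disjoint[of C "a T0"] finC by blast
    then have cS: "card S = t" using cC per[OF T0] t2 by linarith
    have "\<forall>T\<in>TT. t \<le> card (S \<inter> T)"
    proof
      fix T assume T: "T \<in> TT"
      have "S \<subseteq> T" using per[OF T] same T unfolding S_def a_def by auto
      then show "t \<le> card (S \<inter> T)" using cS by (simp add: Int_absorb2)
    qed
    then show False using notau SU cS by blast
  qed
  define P where "P = {Asm. Asm \<subseteq> X \<and> card Asm = 2}"
  have cP: "card P = 3" unfolding P_def using n_subsets[OF finX, of 2] cX by (simp add: choose_two)
  have finP: "finite P" unfolding P_def using finX by auto
  have aP: "a T \<in> P" if "T \<in> TT" for T using per[OF that] unfolding P_def a_def by auto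
  define E where "E = {B. B \<subseteq> Y \<and> card B = 2}"
  have bE: "b T \<in> E" if "T \<in> TT" for T using per[OF that] unfolding E_def b_def by auto
  have finE: "finite E" unfolding E_def using finY by auto
  have m5: "card Y \<ge> 5" using cY kt by linarith
  show ?thesis
  proof (cases "\<forall>T1\<in>TT. \<forall>T2\<in>TT. b T1 \<inter> b T2 \<noteq> {}")
    case True
    have H1: "b ` TT \<subseteq> {B. B \<subseteq> Y \<and> card B = 2}" using bE unfolding E_def by auto
    have H2: "\<forall>B1\<in>b ` TT. \<forall>B2\<in>b ` TT. B1 \<inter> B2 \<noteq> {}" using True by blast
    have m4: "4 \<le> card Y" using m5 by linarith
    have "card (b ` TT) \<le> card Y - 1" by (rule L4[OF finY m4 H1 H2])
    moreover have "card TT \<le> card P * card (b ` TT)"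
      using count[of TT P "b ` TT"] aP finP finTT by auto
    ultimately have "card TT \<le> 3 * (card Y - 1)" using cP by simp
    then show ?thesis using cY kt by linarith
  next
    case False
    then obtain T1 T2 where T12: "T1 \<in> TT" "T2 \<in> TT" "b T1 \<inter> b T2 = {}" by auto
    have a12: "a T1 = a T2" using P2 T12 by blast
    define a0 where "a0 = a T1"
    define Oth where "Oth = {T\<in>TT. a T \<noteq> a0}"
    define Asm where "Asm = {T\<in>TT. a T = a0}"
    have "TT = Oth \<union> Asm" unfolding Oth_def Asm_def by auto
    then have cTT: "card TT \<le> card Oth + card Asm" by (metis card_Un_le)
    define Q where "Q = {B. card B = 2 \<and> B \<inter> b T1 \<noteq> {} \<and> B \<inter> b T2 \<noteq> {}}"
    have Q4: "card Q \<le> 4" "finite Q" using L1[of "b T1" "b T2"] per[OF T12(1)] per[OF T12(2)] T12(3)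
      unfolding Q_def by auto
    have bO: "b ` Oth \<subseteq> Q"
    proof
      fix B assume "B \<in> b ` Oth"
      then obtain T where T: "T \<in> TT" "a T \<noteq> a0" "B = b T" unfolding Oth_def by auto
      show "B \<in> Q" unfolding Q_def using P2[OF T(1) T12(1)] P2[OF T(1) T12(2)] T a12 a0_def per[OF T(1)]
        by (auto simp: Int_commute)
    qed
    have a0P: "a0 \<in> P" using aP T12 a0_def by auto
    have aO: "a ` Oth \<subseteq> P - {a0}" using aP unfolding Oth_def by auto
    have cP0: "card (P - {a0}) = 2" using cP a0P finP by simp
    have aA: "a ` Asm \<subseteq> {a0}" unfolding Asm_def by auto
    have OTT: "Oth \<subseteq> TT" and ATT: "Asm \<subseteq> TT" unfolding Oth_def Asm_def by auto
    show ?thesis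
    proof (cases "\<exists>O1\<in>Oth. \<exists>O2\<in>Oth. b O1 \<inter> b O2 = {}")
      case True
      then obtain O1 O2 where O12: "O1 \<in> Oth" "O2 \<in> Oth" "b O1 \<inter> b O2 = {}" by auto
      define Q2 where "Q2 = {B. card B = 2 \<and> B \<inter> b O1 \<noteq> {} \<and> B \<inter> b O2 \<noteq> {}}"
      have O12': "O1 \<in> TT" "O2 \<in> TT" "a O1 \<noteq> a0" "a O2 \<noteq> a0" using O12 unfolding Oth_def by auto
      have Q24: "card Q2 \<le> 4" "finite Q2" using L1[of "b O1" "b O2"] per[OF O12'(1)] per[OF O12'(2)] O12(3)
        unfolding Q2_def by auto
      have bA: "b ` Asm \<subseteq> Q2"
      proof
        fix B assume "B \<in> b ` Asm"
        then obtain T where T: "T \<in> TT" "a T = a0" "B = b T" unfolding Asm_def by auto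
        show "B \<in> Q2" unfolding Q2_def using P2[OF T(1) O12'(1)] P2[OF T(1) O12'(2)] T O12' per[OF T(1)]
          by (auto simp: Int_commute)
      qed
      have "card Asm \<le> card {a0} * card Q2" using count[OF ATT aA bA] Q24 by auto
      then have cA: "card Asm \<le> 4" using Q24 by simp
      have "card Oth \<le> card (P - {a0}) * card Q" using count[OF OTT aO bO] Q4 finP by auto
      then have cO: "card Oth \<le> 8" using cP0 Q4 by simp
      show ?thesis using cTT cA cO kt by linarith
    next
      case False
      then have Iint: "\<forall>B1\<in>b ` Oth. \<forall>B2\<in>b ` Oth. B1 \<inter> B2 \<noteq> {}" by auto
      have "card (b ` Oth) \<le> 2"
        using L2[of "b T1" "b T2" "b ` Oth"] per[OF T12(1)] per[OF T12(2)] T12(3) bO Iint unfolding Q_def by auto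
      moreover have "card Oth \<le> card (P - {a0}) * card (b ` Oth)"
        using count[OF OTT aO] finP finite_subset[OF OTT finTT] by auto
      ultimately have cO: "card Oth \<le> 4" using cP0 by simp
      obtain O0 where O0: "O0 \<in> TT" "a O0 \<noteq> a0" using diffa by metis
      define Q3 where "Q3 = {B. B \<subseteq> Y \<and> card B = 2 \<and> B \<inter> b O0 \<noteq> {}}"
      have Q3c: "card Q3 \<le> 2 * (card Y - 1)" unfolding Q3_def
        using L3[OF finY, of "b O0"] per[OF O0(1)] b_def by auto
      have finQ3: "finite Q3" unfolding Q3_def using finY by auto
      have bA: "b ` Asm \<subseteq> Q3"
      proof
        fix B assume "B \<in> b ` Asm"
        then obtain T where T: "T \<in> TT" "a T = a0" "B = b T" unfolding Asm_def by auto
        show "B \<in> Q3" unfolding Q3_def using P2[OF T(1) O0(1)] T O0 bE[OF T(1)] unfolding E_def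
          by auto
      qed
      have "card Asm \<le> card {a0} * card Q3" using count[OF ATT aA bA] finQ3 by auto
      then have cA: "card Asm \<le> 2 * (card Y - 1)" using Q3c by simp
      show ?thesis using cTT cA cO cY kt by linarith
    qed
  qed
qed


theorem lemma2p6:
  fixes n k t :: nat and \<F> :: "nat set set"
  assumes "n > 2 * k" and "k \<ge> t + 3" and "t \<ge> 2"
    and "maximal_t_intersecting n k t \<F>"
    and "tau_t n t \<F> = t + 2"
    and "tau_t n t (T_t n t \<F>) = t + 1"
    and "\<exists>U\<in>U_t n t \<F>. \<exists>F\<in>\<F>. card (U \<inter> F) \<le> t - 2"
  shows "card (T_t n t \<F>) < (t + 2) * (k - t) + 1"
proof -
  note nk = assms(1) and kt = assms(2) and t2 = assms(3) and mx = assms(4)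
  obtain U F where UU: "U \<in> U_t n t \<F>" and FF: "F \<in> \<F>" and UF: "card (U \<inter> F) \<le> t - 2"
    using assms(7) by blast
  define TT where "TT = T_t n t \<F>"
  have Fsub: "\<F> \<subseteq> k_subsets n k" and Fint: "t_intersecting t \<F>"
    and Fmax: "\<forall>\<G>. \<F> \<subset> \<G> \<and> \<G> \<subseteq> k_subsets n k \<longrightarrow> \<not> t_intersecting t \<G>"
    using mx unfolding maximal_t_intersecting_def by auto
  have Fn: "F \<subseteq> {1..n}" and cF: "card F = k" using FF Fsub unfolding k_subsets_def by auto
  have Ucov: "is_t_cover n t TT U" and cU: "card U = t + 1"
    using UU assms(6) unfolding U_t_def T_t_def TT_def by auto
  have Un: "U \<subseteq> {1..n}" and Ucov': "\<forall>G\<in>TT. t \<le> card (U \<inter> G)"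
    using Ucov unfolding is_t_cover_def by auto
  have TTd: "T \<subseteq> {1..n} \<and> card T = t + 2 \<and> (\<forall>G\<in>\<F>. t \<le> card (T \<inter> G))" if "T \<in> TT" for T
    using that assms(5) unfolding TT_def T_t_def is_t_cover_def by auto
  have hT: "\<forall>T\<in>TT. card T = t+2 \<and> t \<le> card (T \<inter> F) \<and> t \<le> card (U \<inter> T)"
    using TTd Ucov' FF by blast
  have tint: "\<forall>T1\<in>TT. \<forall>T2\<in>TT. t \<le> card (T1 \<inter> T2)"
  proof (intro ballI)
    fix T1 T2 assume T1: "T1 \<in> TT" and T2: "T2 \<in> TT"
    have T1d: "T1 \<subseteq> {1..n}" "card T1 = t + 2" "\<forall>G\<in>\<F>. t \<le> card (T1 \<inter> G)" using TTd[OF T1] by auto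
    have T2d: "T2 \<subseteq> {1..n}" "card T2 = t + 2" "\<forall>G\<in>\<F>. t \<le> card (T2 \<inter> G)" using TTd[OF T2] by auto
    define R where "R = {1..n} - (T1 \<union> T2)"
    have fin12: "finite (T1 \<union> T2)" using T1d T2d finite_subset by blast
    have "card (T1 \<union> T2) \<le> 2 * t + 4" using card_Un_le[of T1 T2] T1d T2d by linarith
    moreover have "card {1..n} - card (T1 \<union> T2) \<le> card R"
      unfolding R_def using diff_card_le_card_Diff[OF fin12] by blast
    ultimately have cR: "k - (t + 2) \<le> card R" using nk kt by simp
    obtain W where W: "W \<subseteq> R" "card W = k - (t + 2)"
      using obtain_subset_with_card_n[OF cR] by blast
    define G where "G = T2 \<union> W"
    have finW: "finite W" using W unfolding R_def using finite_subset by blast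
    have fT2: "finite T2" using fin12 by auto
    have "T2 \<inter> W = {}" using W unfolding R_def by auto
    then have cG: "card G = k" unfolding G_def using card_Un_disjoint[OF fT2 finW] T2d W(2) kt by simp
    have Gn: "G \<subseteq> {1..n}" unfolding G_def using W T2d unfolding R_def by auto
    have Gcov: "t \<le> card (G \<inter> H)" if "H \<in> \<F>" for H
    proof -
      have "finite (G \<inter> H)" using finW fT2 unfolding G_def by auto
      then have "card (T2 \<inter> H) \<le> card (G \<inter> H)" by (rule card_mono) (auto simp: G_def)
      then show ?thesis using T2d that by fastforce
    qed
    have "G \<in> \<F>"
    proof (rule ccontr)
      assume nG: "G \<notin> \<F>"
      have "\<F> \<subset> insert G \<F>" using nG by auto
      moreover have "insert G \<F> \<subseteq> k_subsets n k" using Fsub Gn cG unfolding k_subsets_def by auto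
      moreover have "t_intersecting t (insert G \<F>)"
        unfolding t_intersecting_def
      proof (intro ballI)
        fix A B assume A: "A \<in> insert G \<F>" and B: "B \<in> insert G \<F>"
        show "t \<le> card (A \<inter> B)"
        proof (cases "A = G")
          case True
          show ?thesis
          proof (cases "B = G")
            case True then show ?thesis using \<open>A = G\<close> cG kt by simp
          next
            case False then show ?thesis using B Gcov \<open>A = G\<close> by auto
          qed
        next
          case False
          show ?thesis
          proof (cases "B = G")
            case True then show ?thesis using A False Gcov[of A] by (simp add: Int_commute)
          next
            case F2: False then show ?thesis using A B False Fint unfolding t_intersecting_def by auto
          qed
        qed
      qed
      ultimately show False using Fmax by blast
    qed
    then have "t \<le> card (T1 \<inter> G)" using T1d by blast
    moreover have "T1 \<inter> G = T1 \<inter> T2" using W unfolding G_def R_def by auto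
    ultimately show "t \<le> card (T1 \<inter> T2)" by simp
  qed
  have notau: "\<not> (\<exists>S\<subseteq>U. card S = t \<and> (\<forall>T\<in>TT. t \<le> card (S \<inter> T)))"
  proof
    assume "\<exists>S\<subseteq>U. card S = t \<and> (\<forall>T\<in>TT. t \<le> card (S \<inter> T))"
    then obtain S where S: "S \<subseteq> U" "card S = t" "\<forall>T\<in>TT. t \<le> card (S \<inter> T)" by blast
    have "is_t_cover n t TT S" unfolding is_t_cover_def using S Un by auto
    then have "tau_t n t TT \<le> t" unfolding tau_t_def using S(2) by (metis (mono_tags, lifting) Least_le)
    then show False using assms(6) TT_def by simp
  qed
  have finU: "finite U" using Un finite_subset by blast
  have finF: "finite F" using Fn finite_subset by blast
  have "card TT \<le> 4 * (k - t)"
    by (rule comb[OF finU finF cU UF cF kt t2 hT tint notau])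
  moreover have "4 * (k - t) \<le> (t + 2) * (k - t)" using t2 by (intro mult_right_mono) auto
  ultimately show ?thesis unfolding TT_def by linarith
qed

end
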